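(* Let $r\in\mathfrak{b}$ have pairwise distinct diagonal entries, let $b_{11},\dots,b_{nn}\in\mathbb{C}^*$ and $b=\sum_{\iota}E_{\iota\iota}\operatorname{diag}(b_{11},\dots,b_{nn})L^\iota(r)$. Then for every $s\in\mathfrak{b}^*$ and every $\iota$, $(bsb^{-1})_{\iota\iota}=\operatorname{tr}(L^\iota(r)s)$.
   Context: $\mathfrak{b}$: upper triangular complex $n\times n$ matrices; $\mathfrak{b}^*=\mathfrak{gl}_n/\mathfrak{n}^+$ with $\mathfrak{n}^+$ the strictly upper triangular matrices (diagonal entries of $bsb^{-1}$ and $\operatorname{tr}(L^\iota s)$ are well defined on this quotient since $b$ and $L^\iota$ are upper triangular). $E_{\iota\iota}$ is the matrix unit; $L^\iota(r)=\big[\operatorname{tr}\prod_{k\ne\iota}(r-r_{kk}I)\big]^{-1}\prod_{k\ne\iota}(r-r_{kk}I)$. The matrix $b$ is invertible upper triangular and satisfies $brb^{-1}=\operatorname{diag}(r)$. *)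

theory Defs
  imports Complex_Main "Jordan_Normal_Form.Matrix"
begin

text \<open>Matrices are n x n complex matrices of Jordan_Normal_Form, indices 0..n-1.\<close>

definition mat_trace :: "complex mat \<Rightarrow> complex" where
  "mat_trace A = (\<Sum>i<dim_row A. A $$ (i,i))"

definition mat_unit :: "nat \<Rightarrow> nat \<Rightarrow> nat \<Rightarrow> complex mat" where
  "mat_unit n i j = mat n n (\<lambda>(k,l). if k = i \<and> l = j then 1 else 0)"

definition prodL :: "nat \<Rightarrow> complex mat \<Rightarrow> complex mat" where
  "prodL \<iota> r = foldr (\<lambda>k M. (r - r $$ (k,k) \<cdot>\<^sub>m 1\<^sub>m (dim_row r)) * M)
                     (filter (\<lambda>k. k \<noteq> \<iota>) [0..<dim_row r]) (1\<^sub>m (dim_row r))"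

definition Lmat :: "nat \<Rightarrow> complex mat \<Rightarrow> complex mat" where
  "Lmat \<iota> r = inverse (mat_trace (prodL \<iota> r)) \<cdot>\<^sub>m prodL \<iota> r"

definition msum :: "nat \<Rightarrow> (nat \<Rightarrow> complex mat) \<Rightarrow> nat list \<Rightarrow> complex mat" where
  "msum n f xs = foldr (\<lambda>i M. f i + M) xs (0\<^sub>m n n)"

definition bmat :: "nat \<Rightarrow> complex mat \<Rightarrow> (nat \<Rightarrow> complex) \<Rightarrow> complex mat" where
  "bmat n r bd = msum n (\<lambda>\<iota>. mat_unit n \<iota> \<iota> * mat_diag n bd * Lmat \<iota> r) [0..<n]"

end

theory Submission imports Defs "Jordan_Normal_Form.Determinant" begin

lemma mult_entry: "A \<in> carrier_mat n n \<Longrightarrow> B \<in> carrier_mat n n \<Longrightarrow> i<n \<Longrightarrow> j<n \<Longrightarrow>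
  (A*B)$$(i,j) = (\<Sum>l<n. A$$(i,l)*B$$(l,j))"
  by (auto simp: scalar_prod_def atLeast0LessThan intro!: sum.cong)

definition TT :: "complex mat \<Rightarrow> nat \<Rightarrow> complex mat" where
  "TT r k = r - r $$ (k,k) \<cdot>\<^sub>m 1\<^sub>m (dim_row r)"
definition FF :: "complex mat \<Rightarrow> nat list \<Rightarrow> complex mat" where
  "FF r xs = foldr (\<lambda>k M. TT r k * M) xs (1\<^sub>m (dim_row r))"

lemma prodL_FF: "prodL \<iota> r = FF r (filter (\<lambda>k. k \<noteq> \<iota>) [0..<dim_row r])"
  unfolding prodL_def FF_def TT_def by simp

context
  fixes n :: nat and r :: "complex mat"
  assumes r: "r \<in> carrier_mat n n" and ru: "upper_triangular r"
begin

lemma TT_carrier[simp]: "TT r k \<in> carrier_mat n n"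
  using r unfolding TT_def by auto

lemma TT_entry: "i<n \<Longrightarrow> j<n \<Longrightarrow> TT r k $$ (i,j) = r$$(i,j) - (if i = j then r$$(k,k) else 0)"
  using r unfolding TT_def by auto

lemma r_low: "i<n \<Longrightarrow> j < i \<Longrightarrow> r $$ (i,j) = 0"
  using ru r by auto

lemma FF_carrier[simp]: "FF r xs \<in> carrier_mat n n"
  using r by (induction xs) (auto simp: FF_def intro!: mult_carrier_mat[of _ n n _ n])

lemma dims: "dim_row (TT r k) = n" "dim_col (TT r k) = n" "dim_row (FF r xs) = n" "dim_col (FF r xs) = n"
  by (rule carrier_matD[OF TT_carrier])+ (rule carrier_matD[OF FF_carrier])+

lemma smult_smult_mat: "(a::complex) \<cdot>\<^sub>m (b \<cdot>\<^sub>m A) = (a*b) \<cdot>\<^sub>m A"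
  by (rule eq_matI) auto

lemma one_smult_mat: "(1::complex) \<cdot>\<^sub>m A = A"
  by (rule eq_matI) auto

lemma FF_Cons: "FF r (x#xs) = TT r x * FF r xs"
  by (simp add: FF_def)

lemma FF_Nil: "FF r [] = 1\<^sub>m n"
  using r by (simp add: FF_def)

lemma FF_append: "FF r (xs@ys) = FF r xs * FF r ys"
proof (induction xs)
  case Nil
  then show ?case using r by (simp add: FF_Nil left_mult_one_mat[OF FF_carrier])
next
  case (Cons x xs)
  then show ?case by (simp add: FF_Cons assoc_mult_mat[of _ n n _ n _ n])
qed

lemma TT_mult_entry: "M \<in> carrier_mat n n \<Longrightarrow> i<n \<Longrightarrow> j<n \<Longrightarrow>
   (TT r k * M) $$ (i,j) = (r*M)$$(i,j) - r$$(k,k) * M$$(i,j)"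
proof -
  assume M: "M \<in> carrier_mat n n" and ij: "i<n" "j<n"
  have "(TT r k * M) $$ (i,j) = (\<Sum>l<n. (r$$(i,l) * M$$(l,j) - (if l = i then r$$(k,k) * M$$(i,j) else 0)))"
    unfolding mult_entry[OF TT_carrier M ij] using M ij by (auto simp: TT_entry left_diff_distrib intro!: sum.cong)
  also have "\<dots> = (r*M)$$(i,j) - r$$(k,k) * M$$(i,j)"
    using M ij r by (simp add: sum_subtractf mult_entry[OF r M ij])
  finally show ?thesis .
qed

lemma FF_upper: "i<n \<Longrightarrow> j<n \<Longrightarrow> j < i \<Longrightarrow> FF r xs $$ (i,j) = 0"
proof (induction xs arbitrary: i j)
  case Nil
  then show ?case using r by (simp add: FF_Nil)
next
  case (Cons x xs)
  have "FF r (x#xs) $$ (i,j) = (\<Sum>l<n. TT r x $$ (i,l) * FF r xs $$ (l,j))"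
    using Cons.prems by (simp add: FF_Cons mult_entry)
  also have "\<dots> = 0"
  proof (rule sum.neutral, rule ballI)
    fix l assume l: "l \<in> {..<n}"
    show "TT r x $$ (i,l) * FF r xs $$ (l,j) = 0"
    proof (cases "l < i")
      case True then show ?thesis using l Cons.prems by (simp add: TT_entry r_low)
    next
      case False then show ?thesis using l Cons.prems Cons.IH[of l j] by simp
    qed
  qed
  finally show ?case .
qed

lemma FF_diag: "j<n \<Longrightarrow> FF r xs $$ (j,j) = prod_list (map (\<lambda>k. r$$(j,j) - r$$(k,k)) xs)"
proof (induction xs)
  case Nil
  then show ?case using r by (simp add: FF_Nil)
next
  case (Cons x xs)
  have "FF r (x#xs) $$ (j,j) = (\<Sum>l<n. TT r x $$ (j,l) * FF r xs $$ (l,j))"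
    using Cons.prems by (simp add: FF_Cons mult_entry)
  also have "\<dots> = (\<Sum>l<n. if l = j then TT r x $$ (j,j) * FF r xs $$ (j,j) else 0)"
  proof (rule sum.cong[OF refl])
    fix l assume l: "l \<in> {..<n}"
    show "TT r x $$ (j,l) * FF r xs $$ (l,j) = (if l = j then TT r x $$ (j,j) * FF r xs $$ (j,j) else 0)"
      using l Cons.prems FF_upper[of l j xs] by (cases "l < j") (auto simp: TT_entry r_low)
  qed
  also have "\<dots> = TT r x $$ (j,j) * FF r xs $$ (j,j)" using Cons.prems by simp
  finally show ?case using Cons by (simp add: TT_entry)
qed

lemma FF_rows: "m \<le> n \<Longrightarrow> m \<le> i \<Longrightarrow> i<n \<Longrightarrow> j<n \<Longrightarrow> FF r [m..<n] $$ (i,j) = 0"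
proof (induction m arbitrary: i rule: inc_induct)
  case base
  then show ?case by simp
next
  case (step m)
  have "FF r [m..<n] $$ (i,j) = (\<Sum>l<n. TT r m $$ (i,l) * FF r [Suc m..<n] $$ (l,j))"
    using step by (simp add: upt_conv_Cons FF_Cons mult_entry)
  also have "\<dots> = 0"
  proof (rule sum.neutral, rule ballI)
    fix l assume l: "l \<in> {..<n}"
    show "TT r m $$ (i,l) * FF r [Suc m..<n] $$ (l,j) = 0"
    proof (cases "l < i")
      case True then show ?thesis using l step by (simp add: TT_entry r_low)
    next
      case False
      show ?thesis
      proof (cases "Suc m \<le> l")
        case True then show ?thesis using l step step.IH[of l] by simp
      next
        case False2: False
        then have "l = m" "i = m" using False step by auto
        then show ?thesis using step by (simp add: TT_entry)
      qed
    qed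
  qed
  finally show ?case .
qed

lemma FF_cols: "m \<le> n \<Longrightarrow> i<n \<Longrightarrow> j < m \<Longrightarrow> FF r [0..<m] $$ (i,j) = 0"
proof (induction m arbitrary: j)
  case 0
  then show ?case by simp
next
  case (Suc m)
  have e: "FF r [0..<Suc m] = FF r [0..<m] * TT r m"
    using r by (simp add: FF_append FF_Cons FF_Nil right_mult_one_mat[OF TT_carrier])
  have "FF r [0..<Suc m] $$ (i,j) = (\<Sum>l<n. FF r [0..<m] $$ (i,l) * TT r m $$ (l,j))"
    using Suc.prems unfolding e by (simp add: mult_entry)
  also have "\<dots> = 0"
  proof (rule sum.neutral, rule ballI)
    fix l assume l: "l \<in> {..<n}"
    show "FF r [0..<m] $$ (i,l) * TT r m $$ (l,j) = 0"
    proof (cases "l < m")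
      case True then show ?thesis using l Suc.prems Suc.IH[of l] by simp
    next
      case False
      then have "j < l \<or> (l = j \<and> j = m)" using Suc.prems by auto
      then show ?thesis using l Suc.prems by (auto simp: TT_entry r_low)
    qed
  qed
  finally show ?case .
qed

lemma TT_mult_entry_right: "M \<in> carrier_mat n n \<Longrightarrow> i<n \<Longrightarrow> j<n \<Longrightarrow>
   (M * TT r k) $$ (i,j) = (M*r)$$(i,j) - r$$(k,k) * M$$(i,j)"
proof -
  assume M: "M \<in> carrier_mat n n" and ij: "i<n" "j<n"
  have "(M * TT r k) $$ (i,j) = (\<Sum>l<n. (M$$(i,l) * r$$(l,j) - (if l = j then r$$(k,k) * M$$(i,j) else 0)))"
    unfolding mult_entry[OF M TT_carrier ij] using M ij by (auto simp: TT_entry right_diff_distrib intro!: sum.cong)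
  also have "\<dots> = (M*r)$$(i,j) - r$$(k,k) * M$$(i,j)"
    using M ij r by (simp add: sum_subtractf mult_entry[OF M r ij])
  finally show ?thesis .
qed

lemma r_TT_comm: "r * TT r k = TT r k * r"
proof (rule eq_matI)
  fix i j assume "i < dim_row (TT r k * r)" "j < dim_col (TT r k * r)"
  then have ij: "i<n" "j<n" using r by (auto simp: dims)
  show "(r * TT r k) $$ (i,j) = (TT r k * r) $$ (i,j)"
    by (simp only: TT_mult_entry[OF r ij] TT_mult_entry_right[OF r ij])
qed (use r in \<open>auto simp: dims\<close>)

lemma r_FF_comm: "r * FF r xs = FF r xs * r"
proof (induction xs)
  case Nil
  then show ?case using r by (simp add: FF_Nil)
next
  case (Cons x xs)
  have "r * FF r (x#xs) = (r * TT r x) * FF r xs"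
    using r by (simp add: FF_Cons assoc_mult_mat[of _ n n _ n _ n])
  also have "\<dots> = TT r x * (r * FF r xs)"
    using r by (simp add: r_TT_comm assoc_mult_mat[of _ n n _ n _ n])
  also have "\<dots> = (TT r x * FF r xs) * r"
    using r by (simp add: Cons.IH assoc_mult_mat[of _ n n _ n _ n])
  finally show ?case by (simp add: FF_Cons)
qed

lemma TT_FF_comm: "TT r k * FF r xs = FF r xs * TT r k"
proof (rule eq_matI)
  fix i j assume "i < dim_row (FF r xs * TT r k)" "j < dim_col (FF r xs * TT r k)"
  then have ij: "i<n" "j<n" by (auto simp: dims)
  show "(TT r k * FF r xs) $$ (i,j) = (FF r xs * TT r k) $$ (i,j)"
    by (simp only: TT_mult_entry[OF FF_carrier ij] TT_mult_entry_right[OF FF_carrier ij] r_FF_comm)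
qed (auto simp: dims)

lemma FF_all_zero: "FF r [0..<n] = 0\<^sub>m n n"
  by (rule eq_matI) (use FF_rows[of 0] in \<open>auto simp: dims\<close>)

definition PP where "PP \<iota> = FF r (filter (\<lambda>k. k \<noteq> \<iota>) [0..<n])"

lemma PP_carrier[simp]: "PP \<iota> \<in> carrier_mat n n" unfolding PP_def by simp
lemma PP_dims[simp]: "dim_row (PP \<iota>) = n" "dim_col (PP \<iota>) = n" unfolding PP_def by (simp_all add: dims)

lemma PP_split: "\<iota> < n \<Longrightarrow> PP \<iota> = FF r [0..<\<iota>] * FF r [Suc \<iota>..<n]"
proof -
  assume i: "\<iota> < n"
  have "[0..<n] = [0..<\<iota>] @ [\<iota>..<n]" using i
    by (metis le_add_diff_inverse less_imp_le_nat upt_add_eq_append zero_le)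
  also have "[\<iota>..<n] = \<iota> # [Suc \<iota>..<n]" using i by (simp add: upt_conv_Cons)
  finally have e: "[0..<n] = [0..<\<iota>] @ \<iota> # [Suc \<iota>..<n]" .
  have "filter (\<lambda>k. k \<noteq> \<iota>) [0..<n] = [0..<\<iota>] @ [Suc \<iota>..<n]"
    unfolding e by (auto simp: filter_id_conv)
  then show ?thesis unfolding PP_def by (simp add: FF_append)
qed

lemma TT_PP_zero: "\<iota> < n \<Longrightarrow> TT r \<iota> * PP \<iota> = 0\<^sub>m n n"
proof -
  assume i: "\<iota> < n"
  have "[0..<n] = [0..<\<iota>] @ [\<iota>..<n]" using i
    by (metis le_add_diff_inverse less_imp_le_nat upt_add_eq_append zero_le)
  also have "[\<iota>..<n] = \<iota> # [Suc \<iota>..<n]" using i by (simp add: upt_conv_Cons)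
  finally have e: "[0..<n] = [0..<\<iota>] @ \<iota> # [Suc \<iota>..<n]" .
  have "0\<^sub>m n n = FF r [0..<\<iota>] * (TT r \<iota> * FF r [Suc \<iota>..<n])"
    using FF_all_zero unfolding e by (simp add: FF_append FF_Cons)
  also have "\<dots> = (FF r [0..<\<iota>] * TT r \<iota>) * FF r [Suc \<iota>..<n]"
    by (simp add: assoc_mult_mat[of _ n n _ n _ n])
  also have "\<dots> = (TT r \<iota> * FF r [0..<\<iota>]) * FF r [Suc \<iota>..<n]"
    by (simp only: TT_FF_comm)
  also have "\<dots> = TT r \<iota> * (FF r [0..<\<iota>] * FF r [Suc \<iota>..<n])"
    by (simp add: assoc_mult_mat[of _ n n _ n _ n])
  finally show ?thesis using PP_split[OF i] by simp
qed

lemma TT_PP: "\<iota> < n \<Longrightarrow> TT r k * PP \<iota> = (r$$(\<iota>,\<iota>) - r$$(k,k)) \<cdot>\<^sub>m PP \<iota>"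
proof (rule eq_matI)
  fix i j assume i: "\<iota> < n" and ij: "i < dim_row ((r$$(\<iota>,\<iota>) - r$$(k,k)) \<cdot>\<^sub>m PP \<iota>)"
     "j < dim_col ((r$$(\<iota>,\<iota>) - r$$(k,k)) \<cdot>\<^sub>m PP \<iota>)"
  then have ij': "i<n" "j<n" by auto
  have "(TT r \<iota> * PP \<iota>) $$ (i,j) = 0" using TT_PP_zero[OF i] ij' by simp
  then have "(r * PP \<iota>) $$ (i,j) = r$$(\<iota>,\<iota>) * PP \<iota> $$ (i,j)"
    using TT_mult_entry[OF PP_carrier ij'] by simp
  then show "(TT r k * PP \<iota>) $$ (i,j) = ((r$$(\<iota>,\<iota>) - r$$(k,k)) \<cdot>\<^sub>m PP \<iota>) $$ (i,j)"
    using TT_mult_entry[OF PP_carrier ij'] ij' by (simp add: left_diff_distrib)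
qed (use r in \<open>auto simp: dims\<close>)

lemma FF_PP: "\<iota> < n \<Longrightarrow> FF r xs * PP \<iota> = prod_list (map (\<lambda>k. r$$(\<iota>,\<iota>) - r$$(k,k)) xs) \<cdot>\<^sub>m PP \<iota>"
proof (induction xs)
  case Nil
  then show ?case using r by (simp add: FF_Nil left_mult_one_mat[OF PP_carrier] one_smult_mat)
next
  case (Cons x xs)
  have "FF r (x#xs) * PP \<iota> = TT r x * (FF r xs * PP \<iota>)"
    by (simp add: FF_Cons assoc_mult_mat[of _ n n _ n _ n])
  also have "\<dots> = prod_list (map (\<lambda>k. r$$(\<iota>,\<iota>) - r$$(k,k)) xs) \<cdot>\<^sub>m (TT r x * PP \<iota>)"
    by (simp add: Cons mult_smult_distrib[of _ n n _ n])
  also have "\<dots> = prod_list (map (\<lambda>k. r$$(\<iota>,\<iota>) - r$$(k,k)) (x#xs)) \<cdot>\<^sub>m PP \<iota>"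
    using Cons.prems by (simp only: TT_PP smult_smult_mat list.map prod_list.Cons mult.commute)
  finally show ?case .
qed


definition tt where "tt \<iota> = prod_list (map (\<lambda>k. r$$(\<iota>,\<iota>) - r$$(k,k)) (filter (\<lambda>k. k \<noteq> \<iota>) [0..<n]))"

lemma PP_diag_self: "\<iota> < n \<Longrightarrow> PP \<iota> $$ (\<iota>,\<iota>) = tt \<iota>"
  unfolding PP_def tt_def by (rule FF_diag)

lemma PP_diag_other: "\<iota> < n \<Longrightarrow> j < n \<Longrightarrow> j \<noteq> \<iota> \<Longrightarrow> PP \<iota> $$ (j,j) = 0"
  unfolding PP_def by (subst FF_diag) (auto simp: prod_list_zero_iff)

lemma PP_trace: "\<iota> < n \<Longrightarrow> mat_trace (PP \<iota>) = tt \<iota>"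
proof -
  assume i: "\<iota> < n"
  have "mat_trace (PP \<iota>) = (\<Sum>j<n. if j = \<iota> then tt \<iota> else 0)"
    unfolding mat_trace_def PP_dims using i by (intro sum.cong) (auto simp: PP_diag_self PP_diag_other)
  also have "\<dots> = tt \<iota>" using i by simp
  finally show ?thesis .
qed

lemma PP_PP: "\<iota> < n \<Longrightarrow> \<kappa> < n \<Longrightarrow> PP \<kappa> * PP \<iota> = (if \<kappa> = \<iota> then tt \<iota> \<cdot>\<^sub>m PP \<iota> else 0\<^sub>m n n)"
proof -
  assume i: "\<iota> < n" and k: "\<kappa> < n"
  have e: "PP \<kappa> * PP \<iota> = prod_list (map (\<lambda>k. r$$(\<iota>,\<iota>) - r$$(k,k)) (filter (\<lambda>k. k \<noteq> \<kappa>) [0..<n])) \<cdot>\<^sub>m PP \<iota>"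
    unfolding PP_def[of \<kappa>] using FF_PP[OF i] by simp
  show ?thesis
  proof (cases "\<kappa> = \<iota>")
    case True then show ?thesis using e by (simp add: tt_def)
  next
    case False
    then have "prod_list (map (\<lambda>k. r$$(\<iota>,\<iota>) - r$$(k,k)) (filter (\<lambda>k. k \<noteq> \<kappa>) [0..<n])) = 0"
      using i by (auto simp: prod_list_zero_iff)
    then show ?thesis using e False by (auto intro!: eq_matI)
  qed
qed

lemma PP_rows: "\<iota> < n \<Longrightarrow> \<iota> < i \<Longrightarrow> i < n \<Longrightarrow> j < n \<Longrightarrow> PP \<iota> $$ (i,j) = 0"
proof -
  assume a: "\<iota> < n" "\<iota> < i" "i < n" "j < n"
  have "PP \<iota> $$ (i,j) = (\<Sum>l<n. FF r [0..<\<iota>] $$ (i,l) * FF r [Suc \<iota>..<n] $$ (l,j))"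
    using a by (simp add: PP_split mult_entry[OF FF_carrier FF_carrier])
  also have "\<dots> = 0"
  proof (rule sum.neutral, rule ballI)
    fix l assume l: "l \<in> {..<n}"
    show "FF r [0..<\<iota>] $$ (i,l) * FF r [Suc \<iota>..<n] $$ (l,j) = 0"
      using FF_upper[of i l "[0..<\<iota>]"] FF_rows[of "Suc \<iota>" l j] a l by (cases "l < i") auto
  qed
  finally show ?thesis .
qed

lemma PP_cols: "\<iota> < n \<Longrightarrow> j < \<iota> \<Longrightarrow> i < n \<Longrightarrow> PP \<iota> $$ (i,j) = 0"
proof -
  assume a: "\<iota> < n" "j < \<iota>" "i < n"
  have "PP \<iota> $$ (i,j) = (\<Sum>l<n. FF r [0..<\<iota>] $$ (i,l) * FF r [Suc \<iota>..<n] $$ (l,j))"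
    using a by (simp add: PP_split mult_entry[OF FF_carrier FF_carrier])
  also have "\<dots> = 0"
  proof (rule sum.neutral, rule ballI)
    fix l assume l: "l \<in> {..<n}"
    show "FF r [0..<\<iota>] $$ (i,l) * FF r [Suc \<iota>..<n] $$ (l,j) = 0"
      using FF_cols[of \<iota> i l] FF_upper[of l j "[Suc \<iota>..<n]"] a l by (cases "l < \<iota>") auto
  qed
  finally show ?thesis .
qed

lemma Lmat_PP: "Lmat \<iota> r = inverse (mat_trace (PP \<iota>)) \<cdot>\<^sub>m PP \<iota>"
  unfolding Lmat_def prodL_FF PP_def using r by simp


context
  assumes rd: "\<forall>i<n. \<forall>j<n. i \<noteq> j \<longrightarrow> r $$ (i,i) \<noteq> r $$ (j,j)"
begin

lemma tt_nz: "\<iota> < n \<Longrightarrow> tt \<iota> \<noteq> 0"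
  unfolding tt_def using rd by (auto simp: prod_list_zero_iff)

lemma L_entry: "\<iota> < n \<Longrightarrow> i < n \<Longrightarrow> j < n \<Longrightarrow> Lmat \<iota> r $$ (i,j) = PP \<iota> $$ (i,j) / tt \<iota>"
  by (simp add: Lmat_PP PP_trace divide_inverse mult.commute)

lemma L_carrier: "Lmat \<iota> r \<in> carrier_mat n n"
  by (simp add: Lmat_PP)

lemma L_self: "\<iota> < n \<Longrightarrow> Lmat \<iota> r $$ (\<iota>,\<iota>) = 1"
  by (simp add: L_entry PP_diag_self tt_nz)

lemma L_rows: "\<iota> < n \<Longrightarrow> \<iota> < i \<Longrightarrow> i < n \<Longrightarrow> j < n \<Longrightarrow> Lmat \<iota> r $$ (i,j) = 0"
  by (simp add: L_entry PP_rows)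

lemma L_cols: "\<iota> < n \<Longrightarrow> j < \<iota> \<Longrightarrow> i < n \<Longrightarrow> Lmat \<iota> r $$ (i,j) = 0"
  by (simp add: L_entry PP_cols)

lemma L_prod: "\<iota> < n \<Longrightarrow> \<kappa> < n \<Longrightarrow> i < n \<Longrightarrow> j < n \<Longrightarrow>
  (\<Sum>l<n. Lmat \<kappa> r $$ (i,l) * Lmat \<iota> r $$ (l,j)) = (if \<kappa> = \<iota> then Lmat \<iota> r $$ (i,j) else 0)"
proof -
  assume a: "\<iota> < n" "\<kappa> < n" "i < n" "j < n"
  have "(\<Sum>l<n. Lmat \<kappa> r $$ (i,l) * Lmat \<iota> r $$ (l,j)) = (\<Sum>l<n. PP \<kappa> $$ (i,l) * PP \<iota> $$ (l,j)) / (tt \<kappa> * tt \<iota>)"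
    using a by (simp add: L_entry sum_divide_distrib)
  also have "\<dots> = (PP \<kappa> * PP \<iota>) $$ (i,j) / (tt \<kappa> * tt \<iota>)"
    unfolding mult_entry[OF PP_carrier PP_carrier a(3) a(4)] ..
  also have "\<dots> = (if \<kappa> = \<iota> then Lmat \<iota> r $$ (i,j) else 0)"
    using a by (simp add: PP_PP L_entry tt_nz)
  finally show ?thesis .
qed

lemma L_rank1: "\<iota> < n \<Longrightarrow> i < n \<Longrightarrow> j < n \<Longrightarrow> Lmat \<iota> r $$ (i,j) = Lmat \<iota> r $$ (i,\<iota>) * Lmat \<iota> r $$ (\<iota>,j)"
proof -
  assume a: "\<iota> < n" "i < n" "j < n"
  have "Lmat \<iota> r $$ (i,j) = (\<Sum>l<n. Lmat \<iota> r $$ (i,l) * Lmat \<iota> r $$ (l,j))"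
    using L_prod[OF a(1) a(1) a(2,3)] by simp
  also have "\<dots> = (\<Sum>l<n. if l = \<iota> then Lmat \<iota> r $$ (i,\<iota>) * Lmat \<iota> r $$ (\<iota>,j) else 0)"
  proof (rule sum.cong[OF refl])
    fix l assume l: "l \<in> {..<n}"
    show "Lmat \<iota> r $$ (i,l) * Lmat \<iota> r $$ (l,j) = (if l = \<iota> then Lmat \<iota> r $$ (i,\<iota>) * Lmat \<iota> r $$ (\<iota>,j) else 0)"
      using a l L_rows[of \<iota> l j] L_cols[of \<iota> l i] by (cases "l < \<iota>"; cases "\<iota> < l") auto
  qed
  also have "\<dots> = Lmat \<iota> r $$ (i,\<iota>) * Lmat \<iota> r $$ (\<iota>,j)" using a by simp
  finally show ?thesis .
qed

end

end

lemma msum_props: "(\<forall>x\<in>set xs. f x \<in> carrier_mat n n) \<Longrightarrow> msum n f xs \<in> carrier_mat n n \<and>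
   (\<forall>i<n. \<forall>j<n. msum n f xs $$ (i,j) = (\<Sum>x\<leftarrow>xs. f x $$ (i,j)))"
  by (induction xs) (auto simp: msum_def)

lemma sum_list_upt_delta: "i < n \<Longrightarrow> (\<Sum>x\<leftarrow>[0..<n]. if i = x then (c x::complex) else 0) = c i"
  by (simp add: sum_set_upt_conv_sum_list_nat[symmetric])

lemma EDL_entry: "L \<in> carrier_mat n n \<Longrightarrow> x < n \<Longrightarrow> i < n \<Longrightarrow> j < n \<Longrightarrow>
  (mat_unit n x x * mat_diag n bd * L) $$ (i,j) = (if i = x then bd x * L $$ (x,j) else 0)"
proof -
  assume a: "L \<in> carrier_mat n n" "x < n" "i < n" "j < n"
  have EC: "mat_unit n x x \<in> carrier_mat n n" by (simp add: mat_unit_def)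
  have ED: "mat_unit n x x * mat_diag n bd = Matrix.mat n n (\<lambda>(i,l). if i = x \<and> l = x then bd x else 0)"
  proof (rule eq_matI)
    fix i l assume il: "i < dim_row (Matrix.mat n n (\<lambda>(i,l). if i = x \<and> l = x then bd x else 0))"
      "l < dim_col (Matrix.mat n n (\<lambda>(i,l). if i = x \<and> l = x then bd x else 0))"
    then have il': "i < n" "l < n" by auto
    have "(mat_unit n x x * mat_diag n bd) $$ (i,l) = (\<Sum>m<n. (if i = x \<and> m = x then 1 else 0) * (if m = l then bd l else 0))"
      unfolding mult_entry[OF EC mat_diag_dim il'] using il' by (simp add: mat_unit_def mat_diag_def)
    also have "\<dots> = (\<Sum>m<n. if m = x then (if i = x \<and> l = x then bd x else 0) else 0)"
      by (rule sum.cong) auto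
    also have "\<dots> = Matrix.mat n n (\<lambda>(i,l). if i = x \<and> l = x then bd x else 0) $$ (i,l)"
      using il' a by simp
    finally show "(mat_unit n x x * mat_diag n bd) $$ (i,l) = Matrix.mat n n (\<lambda>(i,l). if i = x \<and> l = x then bd x else 0) $$ (i,l)" .
  qed (auto simp: mat_unit_def mat_diag_def)
  have EDC: "Matrix.mat n n (\<lambda>(i,l). if i = x \<and> l = x then bd x else 0) \<in> carrier_mat n n" by simp
  have "(mat_unit n x x * mat_diag n bd * L) $$ (i,j) = (\<Sum>m<n. if m = x then (if i = x then bd x * L $$ (x,j) else 0) else 0)"
    unfolding ED mult_entry[OF EDC a(1) a(3,4)] using a by (intro sum.cong) auto
  then show ?thesis using a by simp
qed

theorem mainTheorem17:
  fixes n :: nat and r s :: "complex mat" and bd :: "nat \<Rightarrow> complex" and \<iota> :: nat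
  assumes r_carrier: "r \<in> carrier_mat n n"
    and r_upper: "upper_triangular r"
    and r_distinct: "\<forall>i<n. \<forall>j<n. i \<noteq> j \<longrightarrow> r $$ (i,i) \<noteq> r $$ (j,j)"
    and bd_nonzero: "\<forall>i<n. bd i \<noteq> 0"
    and s_carrier: "s \<in> carrier_mat n n"
    and iota: "\<iota> < n"
  shows "invertible_mat (bmat n r bd) \<and>
    (\<forall>binv \<in> carrier_mat n n. bmat n r bd * binv = 1\<^sub>m n \<longrightarrow>
       (bmat n r bd * s * binv) $$ (\<iota>,\<iota>) = mat_trace (Lmat \<iota> r * s))"
proof -
  let ?L = "\<lambda>k. Lmat k r"
  note LC = L_carrier[OF r_carrier r_upper r_distinct]
  note Lprod = L_prod[OF r_carrier r_upper r_distinct]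
  note Lr1 = L_rank1[OF r_carrier r_upper r_distinct]
  note Lself = L_self[OF r_carrier r_upper r_distinct]
  define b where "b = bmat n r bd"
  have mp: "msum n (\<lambda>\<iota>. mat_unit n \<iota> \<iota> * mat_diag n bd * Lmat \<iota> r) [0..<n] \<in> carrier_mat n n \<and>
   (\<forall>i<n. \<forall>j<n. msum n (\<lambda>\<iota>. mat_unit n \<iota> \<iota> * mat_diag n bd * Lmat \<iota> r) [0..<n] $$ (i,j) =
      (\<Sum>x\<leftarrow>[0..<n]. (mat_unit n x x * mat_diag n bd * Lmat x r) $$ (i,j)))"
    by (rule msum_props) (auto intro!: mult_carrier_mat[of _ n n _ n] LC simp: mat_unit_def)
  have bC: "b \<in> carrier_mat n n" using mp by (simp add: b_def bmat_def)
  have bE: "b $$ (i,j) = bd i * ?L i $$ (i,j)" if "i < n" "j < n" for i j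
  proof -
    have "b $$ (i,j) = (\<Sum>x\<leftarrow>[0..<n]. (mat_unit n x x * mat_diag n bd * Lmat x r) $$ (i,j))"
      using mp that by (simp add: b_def bmat_def)
    also have "\<dots> = (\<Sum>x\<leftarrow>[0..<n]. if i = x then bd x * Lmat x r $$ (x,j) else 0)"
      by (rule arg_cong[where f=sum_list], rule map_cong) (use that LC in \<open>auto simp: EDL_entry\<close>)
    also have "\<dots> = bd i * ?L i $$ (i,j)" by (rule sum_list_upt_delta[OF that(1)])
    finally show ?thesis .
  qed
  define V where "V = Matrix.mat n n (\<lambda>(i,j). ?L j $$ (i,j) / bd j)"
  have VC: "V \<in> carrier_mat n n" by (simp add: V_def)
  have bV: "b * V = 1\<^sub>m n"
  proof (rule eq_matI)
    fix i j assume "i < dim_row (1\<^sub>m n :: complex mat)" "j < dim_col (1\<^sub>m n :: complex mat)"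
    then have ij: "i < n" "j < n" by auto
    have "(b * V) $$ (i,j) = (\<Sum>l<n. bd i * ?L i $$ (i,l) * (?L j $$ (l,j) / bd j))"
      unfolding mult_entry[OF bC VC ij] using ij by (auto simp: bE V_def intro!: sum.cong)
    also have "\<dots> = bd i / bd j * (\<Sum>l<n. ?L i $$ (i,l) * ?L j $$ (l,j))"
      by (simp add: sum_distrib_left algebra_simps)
    also have "\<dots> = (1\<^sub>m n :: complex mat) $$ (i,j)"
      using ij Lprod[of j i i j] Lself[of j] bd_nonzero by auto
    finally show "(b * V) $$ (i,j) = (1\<^sub>m n :: complex mat) $$ (i,j)" .
  qed (use bC VC in auto)
  have Vb: "V * b = 1\<^sub>m n" by (rule mat_mult_left_right_inverse[OF bC VC bV])
  have inv: "invertible_mat b"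
    unfolding invertible_mat_def inverts_mat_def square_mat.simps using bC VC bV Vb by auto
  have main: "(b * s * binv) $$ (\<iota>,\<iota>) = mat_trace (?L \<iota> * s)"
    if bi: "binv \<in> carrier_mat n n" "b * binv = 1\<^sub>m n" for binv
  proof -
    have "binv = (V * b) * binv" using Vb bi by simp
    also have "\<dots> = V" using assoc_mult_mat[OF VC bC bi(1)] bi VC by simp
    finally have bV': "binv = V" .
    have "(b * s * V) $$ (\<iota>,\<iota>) = (\<Sum>l<n. (b*s) $$ (\<iota>,l) * V $$ (l,\<iota>))"
      using iota by (simp add: mult_entry[OF mult_carrier_mat[OF bC s_carrier] VC])
    also have "\<dots> = (\<Sum>l<n. \<Sum>k<n. ?L l $$ (l,\<iota>) * 0 + ?L \<iota> $$ (l,\<iota>) * ?L \<iota> $$ (\<iota>,k) * s $$ (k,l))"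
    proof (rule sum.cong[OF refl])
      fix l assume l: "l \<in> {..<n}"
      have "(b*s) $$ (\<iota>,l) * V $$ (l,\<iota>) = (\<Sum>k<n. bd \<iota> * ?L \<iota> $$ (\<iota>,k) * s $$ (k,l)) * (?L \<iota> $$ (l,\<iota>) / bd \<iota>)"
        using l iota by (simp add: mult_entry[OF bC s_carrier] bE V_def)
      also have "\<dots> = (\<Sum>k<n. bd \<iota> * ?L \<iota> $$ (\<iota>,k) * s $$ (k,l) * (?L \<iota> $$ (l,\<iota>) / bd \<iota>))"
        by (rule sum_distrib_right)
      also have "\<dots> = (\<Sum>k<n. ?L l $$ (l,\<iota>) * 0 + ?L \<iota> $$ (l,\<iota>) * ?L \<iota> $$ (\<iota>,k) * s $$ (k,l))"
        using bd_nonzero iota by (intro sum.cong refl) (simp add: field_simps)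
      finally show "(b*s) $$ (\<iota>,l) * V $$ (l,\<iota>) = (\<Sum>k<n. ?L l $$ (l,\<iota>) * 0 + ?L \<iota> $$ (l,\<iota>) * ?L \<iota> $$ (\<iota>,k) * s $$ (k,l))" .
    qed
    also have "\<dots> = (\<Sum>l<n. (?L \<iota> * s) $$ (l,l))"
    proof (rule sum.cong[OF refl])
      fix l assume l: "l \<in> {..<n}"
      show "(\<Sum>k<n. ?L l $$ (l,\<iota>) * 0 + ?L \<iota> $$ (l,\<iota>) * ?L \<iota> $$ (\<iota>,k) * s $$ (k,l)) = (?L \<iota> * s) $$ (l,l)"
      proof -
        have l': "l < n" using l by simp
        have "(?L \<iota> * s) $$ (l,l) = (\<Sum>k<n. ?L \<iota> $$ (l,k) * s $$ (k,l))"
          by (rule mult_entry[OF LC s_carrier l' l'])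
        also have "\<dots> = (\<Sum>k<n. ?L l $$ (l,\<iota>) * 0 + ?L \<iota> $$ (l,\<iota>) * ?L \<iota> $$ (\<iota>,k) * s $$ (k,l))"
        proof (rule sum.cong[OF refl])
          fix k assume k: "k \<in> {..<n}"
          then have k': "k < n" by simp
          show "?L \<iota> $$ (l,k) * s $$ (k,l) = ?L l $$ (l,\<iota>) * 0 + ?L \<iota> $$ (l,\<iota>) * ?L \<iota> $$ (\<iota>,k) * s $$ (k,l)"
            using Lr1[OF iota l' k'] by simp
        qed
        finally show ?thesis by simp
      qed
    qed
    also have "\<dots> = mat_trace (?L \<iota> * s)"
      unfolding mat_trace_def using LC[of \<iota>] by simp
    finally show ?thesis using bV' by simp
  qed
  show ?thesis using inv main unfolding b_def by blast
qed

end
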